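(* Let $R\subseteq S$ be as in the context, let $n=n_1+\cdots+n_\ell$ with $n_i$ positive integers, and let $\mathcal{C}\subseteq S^n$ be any code (linear or not) with at least two elements. Setting $k=\log_{|S|}|\mathcal{C}|$, we have ${\rm d}_{SR}(\mathcal{C})\le n-k+1$, where ${\rm d}_{SR}$ is the sum-rank distance over $R$ for the length partition $n=n_1+\cdots+n_\ell$.
   Context: $R$ is a finite commutative chain ring with maximal ideal $\mathfrak{m}$; $S=R[x]/(h)$ with $h\in R[x]$ monic of degree $m$ irreducible modulo $\mathfrak{m}$, a free $R$-module of rank $m$. Rank: for $\mathbf{u}\in S^s$, fix an $R$-basis $\alpha_1,\ldots,\alpha_m$ of $S$ and write $\mathbf{u}=\sum_{i=1}^m\alpha_i(c_{i,1},\ldots,c_{i,s})$ with $c_{i,j}\in R$; ${\rm rk}(\mathbf{u})$ is the number of nonzero diagonal entries in the Smith normal form of $(c_{i,j})\in R^{m\times s}$ (independent of the basis). For $\mathbf{c}=(\mathbf{c}^{(1)},\ldots,\mathbf{c}^{(\ell)})\in S^n$ with $\mathbf{c}^{(i)}\in S^{n_i}$, ${\rm wt}_{SR}(\mathbf{c})=\sum_i{\rm rk}(\mathbf{c}^{(i)})$; ${\rm d}_{SR}(\mathbf{c},\mathbf{d})={\rm wt}_{SR}(\mathbf{c}-\mathbf{d})$; ${\rm d}_{SR}(\mathcal{C})$ is the minimum of ${\rm d}_{SR}(\mathbf{c},\mathbf{d})$ over distinct $\mathbf{c},\mathbf{d}\in\mathcal{C}$. *)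

theory Defs
  imports "HOL-Computational_Algebra.Polynomial" "Jordan_Normal_Form.Matrix"
begin

definition cr_ideal :: "'a::comm_ring_1 set \<Rightarrow> bool" where
  "cr_ideal I \<longleftrightarrow> 0 \<in> I \<and> (\<forall>a\<in>I. \<forall>b\<in>I. a + b \<in> I) \<and> (\<forall>a\<in>I. \<forall>r. r * a \<in> I)"

definition cr_maximal_ideal :: "'a::comm_ring_1 set \<Rightarrow> bool" where
  "cr_maximal_ideal M \<longleftrightarrow> cr_ideal M \<and> M \<noteq> UNIV \<and>
     (\<forall>J. cr_ideal J \<longrightarrow> M \<subseteq> J \<longrightarrow> J = M \<or> J = UNIV)"

definition finite_chain_ring :: "'a::comm_ring_1 itself \<Rightarrow> bool" where
  "finite_chain_ring _ \<longleftrightarrow> finite (UNIV :: 'a set) \<and>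
     (\<forall>I J :: 'a set. cr_ideal I \<longrightarrow> cr_ideal J \<longrightarrow> I \<subseteq> J \<or> J \<subseteq> I)"

(* reduction modulo M of a polynomial is a unit of (R/M)[x], i.e. a nonzero constant *)
definition red_unit :: "'a::comm_ring_1 set \<Rightarrow> 'a poly \<Rightarrow> bool" where
  "red_unit M f \<longleftrightarrow> coeff f 0 \<notin> M \<and> (\<forall>i\<ge>1. coeff f i \<in> M)"

(* reduction modulo M of h is irreducible in (R/M)[x] *)
definition irreducible_mod :: "'a::comm_ring_1 set \<Rightarrow> 'a poly \<Rightarrow> bool" where
  "irreducible_mod M h \<longleftrightarrow>
     (\<exists>i. coeff h i \<notin> M) \<and> \<not> red_unit M h \<and>
     (\<forall>f g. (\<forall>i. coeff (h - f * g) i \<in> M) \<longrightarrow> red_unit M f \<or> red_unit M g)"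

(* S = R[x]/(h), elements represented by their canonical representatives of degree < deg h *)
definition S_set :: "'a::comm_ring_1 poly \<Rightarrow> 'a poly set" where
  "S_set h = {p. degree p < degree h}"

(* S^n: words indexed by 0..n-1, zero outside *)
definition S_words :: "'a::comm_ring_1 poly \<Rightarrow> nat \<Rightarrow> (nat \<Rightarrow> 'a poly) set" where
  "S_words h n = {c. (\<forall>j<n. c j \<in> S_set h) \<and> (\<forall>j\<ge>n. c j = 0)}"

definition snf_rank :: "'a::comm_ring_1 mat \<Rightarrow> nat \<Rightarrow> bool" where
  "snf_rank A r \<longleftrightarrow> (\<exists>P Q D.
     P \<in> carrier_mat (dim_row A) (dim_row A) \<and> invertible_mat P \<and>
     Q \<in> carrier_mat (dim_col A) (dim_col A) \<and> invertible_mat Q \<and>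
     D = P * A * Q \<and>
     (\<forall>i j. i < dim_row A \<longrightarrow> j < dim_col A \<longrightarrow> i \<noteq> j \<longrightarrow> D $$ (i, j) = 0) \<and>
     (\<forall>i. Suc i < min (dim_row A) (dim_col A) \<longrightarrow> D $$ (i, i) dvd D $$ (Suc i, Suc i)) \<and>
     r = card {i. i < min (dim_row A) (dim_col A) \<and> D $$ (i, i) \<noteq> 0})"

definition mat_rank :: "'a::comm_ring_1 mat \<Rightarrow> nat" where
  "mat_rank A = (THE r. snf_rank A r)"

(* coefficient matrix of u = (u a, ..., u (a+s-1)) in S^s w.r.t. the R-basis 1, x, ..., x^(m-1) *)
definition coeff_mat :: "nat \<Rightarrow> (nat \<Rightarrow> 'a::comm_ring_1 poly) \<Rightarrow> nat \<Rightarrow> nat \<Rightarrow> 'a mat" where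
  "coeff_mat m u a s = mat m s (\<lambda>(i, j). coeff (u (a + j)) i)"

definition rk_block :: "nat \<Rightarrow> (nat \<Rightarrow> 'a::comm_ring_1 poly) \<Rightarrow> nat \<Rightarrow> nat \<Rightarrow> nat" where
  "rk_block m u a s = mat_rank (coeff_mat m u a s)"

definition wt_SR :: "nat \<Rightarrow> nat list \<Rightarrow> (nat \<Rightarrow> 'a::comm_ring_1 poly) \<Rightarrow> nat" where
  "wt_SR m ns c = (\<Sum>b<length ns. rk_block m c (sum_list (take b ns)) (ns ! b))"

definition d_SR :: "nat \<Rightarrow> nat list \<Rightarrow> (nat \<Rightarrow> 'a::comm_ring_1 poly) \<Rightarrow> (nat \<Rightarrow> 'a poly) \<Rightarrow> nat" where
  "d_SR m ns c d = wt_SR m ns (\<lambda>j. c j - d j)"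

definition d_SR_code :: "nat \<Rightarrow> nat list \<Rightarrow> (nat \<Rightarrow> 'a::comm_ring_1 poly) set \<Rightarrow> nat" where
  "d_SR_code m ns C = Min {d_SR m ns c d | c d. c \<in> C \<and> d \<in> C \<and> c \<noteq> d}"

end

theory Submission
  imports Defs "Jordan_Normal_Form.Determinant" "Jordan_Normal_Form.Gauss_Jordan_Elimination"
    "HOL-Library.FuncSet"
begin

lemma mult_entry:
  assumes "A \<in> carrier_mat m n" "B \<in> carrier_mat n p" "i < m" "j < p"
  shows "(A * B) $$ (i, j) = (\<Sum>k<n. A $$ (i, k) * B $$ (k, j))"
  using assms by (auto simp: scalar_prod_def lessThan_atLeast0 intro!: sum.cong)

lemma sum_single:
  assumes "finite S" "k0 \<in> S" "\<And>k. k \<in> S \<Longrightarrow> k \<noteq> k0 \<Longrightarrow> f k = 0"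
  shows "sum f S = f k0"
proof -
  have "sum f S = f k0 + sum f (S - {k0})" using assms(1,2) by (simp add: sum.remove)
  also have "sum f (S - {k0}) = 0" using assms(3) by (intro sum.neutral) auto
  finally show ?thesis by simp
qed

lemma nonunit_add:
  assumes chain: "\<And>x y::'a::comm_ring_1. x dvd y \<or> y dvd x"
    and "\<not> (x::'a) dvd 1" "\<not> y dvd 1"
  shows "\<not> (x + y) dvd 1"
proof
  assume u: "(x + y) dvd 1"
  from chain[of x y] show False
  proof
    assume "x dvd y"
    then obtain k where "y = x * k" by blast
    then have "x + y = x * (1 + k)" by (simp add: distrib_left)
    then have "x dvd 1" using u dvd_mult_left[of x "1 + k" 1] by simp
    then show False using assms(2) by blast
  next
    assume "y dvd x"
    then obtain k where "x = y * k" by blast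
    then have "x + y = y * (k + 1)" by (simp add: distrib_left)
    then have "y dvd 1" using u dvd_mult_left[of y "k + 1" 1] by simp
    then show False using assms(3) by blast
  qed
qed

lemma nonunit_sum:
  assumes chain: "\<And>x y::'a::comm_ring_1. x dvd y \<or> y dvd x"
    and "finite S" "\<And>i. i \<in> S \<Longrightarrow> \<not> (f i :: 'a) dvd 1"
  shows "\<not> sum f S dvd 1"
  using assms(2,3)
proof (induction S rule: finite_induct)
  case empty
  then show ?case by simp
next
  case (insert x F)
  then have "\<not> f x dvd 1" "\<not> sum f F dvd 1" by auto
  then show ?case using nonunit_add[OF chain] insert(1,2) by simp
qed

lemma nonunit_prod:
  assumes "finite S" "i \<in> S" "\<not> (f i :: 'a::comm_ring_1) dvd 1"
  shows "\<not> prod f S dvd 1"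
proof
  assume "prod f S dvd 1"
  moreover have "prod f S = f i * prod f (S - {i})" using assms by (simp add: prod.remove)
  ultimately have "f i dvd 1" using dvd_mult_left[of "f i" "prod f (S - {i})" 1] by simp
  then show False using assms(3) by blast
qed

lemma diag_rank_le:
  fixes D W :: "'a::comm_ring_1 mat"
  assumes chain: "\<And>x y::'a. x dvd y \<or> y dvd x"
    and D: "D \<in> carrier_mat m s" and W: "W \<in> carrier_mat s s" and detW: "det W dvd 1"
    and offd: "\<And>i k. i < m \<Longrightarrow> k < s \<Longrightarrow> i \<noteq> k \<Longrightarrow> D $$ (i, k) = 0"
    and zc: "\<And>i c. i < m \<Longrightarrow> c < s \<Longrightarrow> c \<notin> J \<Longrightarrow> (D * W) $$ (i, c) = 0"
    and J: "J \<subseteq> {..<s}"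
  shows "card {i. i < min m s \<and> D $$ (i, i) \<noteq> 0} \<le> card J"
proof (rule ccontr)
  define I where "I = {i. i < min m s \<and> D $$ (i, i) \<noteq> 0}"
  assume "\<not> card {i. i < min m s \<and> D $$ (i, i) \<noteq> 0} \<le> card J"
  then have big: "card J < card I" unfolding I_def by simp
  have nu: "\<not> W $$ (i, c) dvd 1" if i: "i \<in> I" and c: "c < s" "c \<notin> J" for i c
  proof
    assume u: "W $$ (i, c) dvd 1"
    have im: "i < m" "i < s" using i unfolding I_def by auto
    have "(D * W) $$ (i, c) = (\<Sum>k<s. D $$ (i, k) * W $$ (k, c))"
      using mult_entry[OF D W im(1) c(1)] .
    also have "\<dots> = D $$ (i, i) * W $$ (i, c)"
      by (rule sum_single) (use im offd in auto)
    finally have "D $$ (i, i) * W $$ (i, c) = 0" using zc[OF im(1) c] by simp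
    moreover obtain w where w: "1 = W $$ (i, c) * w" using u by (elim dvdE)
    ultimately have "D $$ (i, i) = 0"
    proof -
      assume z: "D $$ (i, i) * W $$ (i, c) = 0"
      have "D $$ (i, i) = D $$ (i, i) * (W $$ (i, c) * w)" using w by simp
      also have "\<dots> = (D $$ (i, i) * W $$ (i, c)) * w" by (simp add: mult.assoc)
      finally show ?thesis using z by simp
    qed
    then show False using i unfolding I_def by simp
  qed
  have "det W = (\<Sum>p\<in>{p. p permutes {0..<s}}. signof p * (\<Prod>i = 0..<s. W $$ (i, p i)))"
    using det_def'[OF W] .
  moreover have "\<not> (\<Sum>p\<in>{p. p permutes {0..<s}}. signof p * (\<Prod>i = 0..<s. W $$ (i, p i))) dvd 1"
  proof (rule nonunit_sum[OF chain])
    show "finite {p. p permutes {0..<s}}" by (simp add: finite_permutations)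
  next
    fix p assume "p \<in> {p. p permutes {0..<s}}"
    then have p: "p permutes {0..<s}" by simp
    have Is: "I \<subseteq> {0..<s}" unfolding I_def by auto
    have "card (p ` I) = card I"
      by (rule card_image) (rule permutes_inj_on[OF p])
    have "\<not> p ` I \<subseteq> J"
    proof
      assume "p ` I \<subseteq> J"
      moreover have "finite J" using J finite_subset by blast
      ultimately have "card (p ` I) \<le> card J" by (rule card_mono[rotated])
      then show False using big \<open>card (p ` I) = card I\<close> by simp
    qed
    then obtain i where i: "i \<in> I" "p i \<notin> J" by blast
    have pis: "p i < s" using permutes_in_image[OF p] Is i(1) by auto
    have "\<not> (\<Prod>i = 0..<s. W $$ (i, p i)) dvd 1"
      by (rule nonunit_prod[of _ i]) (use i Is nu pis in auto)
    then show "\<not> signof p * (\<Prod>i = 0..<s. W $$ (i, p i)) dvd 1"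
      using dvd_mult_right[of "signof p" "\<Prod>i = 0..<s. W $$ (i, p i)" 1] by blast
  qed
  ultimately show False using detW by simp
qed

lemma invertible_inv:
  assumes "invertible_mat (Q :: 'a::comm_ring_1 mat)" "Q \<in> carrier_mat n n"
  shows "\<exists>Qi \<in> carrier_mat n n. Q * Qi = 1\<^sub>m n \<and> Qi * Q = 1\<^sub>m n"
proof -
  from assms obtain B where "inverts_mat Q B" "inverts_mat B Q"
    unfolding invertible_mat_def by blast
  then have e1: "Q * B = 1\<^sub>m n" and e2: "B * Q = 1\<^sub>m (dim_row B)"
    using assms(2) unfolding inverts_mat_def by auto
  have "dim_col (B * Q) = dim_col (1\<^sub>m (dim_row B) :: 'a mat)" using e2 by simp
  then have "dim_row B = n" using assms(2) by simp
  moreover have "dim_col (Q * B) = dim_col (1\<^sub>m n :: 'a mat)" using e1 by simp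
  then have "dim_col B = n" by simp
  ultimately show ?thesis using e1 e2 by auto
qed

lemma invertible_det:
  assumes "invertible_mat (Q :: 'a::comm_ring_1 mat)" "Q \<in> carrier_mat n n"
  shows "det Q dvd 1"
proof -
  obtain Qi where Qi: "Qi \<in> carrier_mat n n" "Q * Qi = 1\<^sub>m n"
    using invertible_inv[OF assms] by blast
  have "det Q * det Qi = 1" using det_mult[OF assms(2) Qi(1)] Qi(2) by simp
  then show ?thesis by (intro dvdI[of _ _ "det Qi"]) simp
qed

lemma snf_rank_le:
  fixes A :: "'a::comm_ring_1 mat"
  assumes chain: "\<And>x y::'a. x dvd y \<or> y dvd x"
    and A: "A \<in> carrier_mat m s"
    and J: "J \<subseteq> {..<s}"
    and zc: "\<And>i c. i < m \<Longrightarrow> c < s \<Longrightarrow> c \<notin> J \<Longrightarrow> A $$ (i, c) = 0"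
    and r: "snf_rank A r"
  shows "r \<le> card J"
proof -
  obtain P Q D where P: "P \<in> carrier_mat m m" "invertible_mat P"
    and Q: "Q \<in> carrier_mat s s" "invertible_mat Q" and DPAQ: "D = P * A * Q"
    and offd: "\<And>i j. i < m \<Longrightarrow> j < s \<Longrightarrow> i \<noteq> j \<Longrightarrow> D $$ (i, j) = 0"
    and rr: "r = card {i. i < min m s \<and> D $$ (i, i) \<noteq> 0}"
    using r A unfolding snf_rank_def by auto
  obtain Qi where Qi: "Qi \<in> carrier_mat s s" "Q * Qi = 1\<^sub>m s" "Qi * Q = 1\<^sub>m s"
    using invertible_inv[OF Q(2) Q(1)] by blast
  have D: "D \<in> carrier_mat m s" using DPAQ P A Q by auto
  have PA: "P * A \<in> carrier_mat m s" using P A by auto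
  have "D * Qi = (P * A) * (Q * Qi)" using DPAQ PA Q Qi by simp
  also have "\<dots> = P * A" using Qi right_mult_one_mat[OF PA] by simp
  finally have DQi: "D * Qi = P * A" .
  have detQi: "det Qi dvd 1"
  proof -
    have "det Qi * det Q = 1" using det_mult[OF Qi(1) Q(1)] Qi(3) by simp
    then show ?thesis by (intro dvdI[of _ _ "det Q"]) (simp add: mult.commute)
  qed
  have "card {i. i < min m s \<and> D $$ (i, i) \<noteq> 0} \<le> card J"
  proof (rule diag_rank_le[OF chain D Qi(1) detQi offd _ J])
    fix i c assume ic: "i < m" "c < s" "c \<notin> J"
    have "(P * A) $$ (i, c) = (\<Sum>k<m. P $$ (i, k) * A $$ (k, c))"
      by (rule mult_entry[OF P(1) A ic(1,2)])
    also have "\<dots> = 0" using zc ic by simp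
    finally show "(D * Qi) $$ (i, c) = 0" using DQi by simp
  qed simp_all
  then show ?thesis using rr by simp
qed

lemma snf_rank_unique:
  fixes A :: "'a::comm_ring_1 mat"
  assumes chain: "\<And>x y::'a. x dvd y \<or> y dvd x"
    and A: "A \<in> carrier_mat m s"
    and r1: "snf_rank A r1" and r2: "snf_rank A r2"
  shows "r2 \<le> r1"
proof -
  obtain P1 Q1 D1 where P1: "P1 \<in> carrier_mat m m" "invertible_mat P1"
    and Q1: "Q1 \<in> carrier_mat s s" "invertible_mat Q1" and D1: "D1 = P1 * A * Q1"
    and offd1: "\<And>i j. i < m \<Longrightarrow> j < s \<Longrightarrow> i \<noteq> j \<Longrightarrow> D1 $$ (i, j) = 0"
    and rr1: "r1 = card {i. i < min m s \<and> D1 $$ (i, i) \<noteq> 0}"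
    using r1 A unfolding snf_rank_def by auto
  obtain P2 Q2 D2 where P2: "P2 \<in> carrier_mat m m" "invertible_mat P2"
    and Q2: "Q2 \<in> carrier_mat s s" "invertible_mat Q2" and D2: "D2 = P2 * A * Q2"
    and offd2: "\<And>i j. i < m \<Longrightarrow> j < s \<Longrightarrow> i \<noteq> j \<Longrightarrow> D2 $$ (i, j) = 0"
    and rr2: "r2 = card {i. i < min m s \<and> D2 $$ (i, i) \<noteq> 0}"
    using r2 A unfolding snf_rank_def by auto
  obtain P1i where P1i: "P1i \<in> carrier_mat m m" "P1 * P1i = 1\<^sub>m m" "P1i * P1 = 1\<^sub>m m"
    using invertible_inv[OF P1(2) P1(1)] by blast
  obtain Q2i where Q2i: "Q2i \<in> carrier_mat s s" "Q2 * Q2i = 1\<^sub>m s" "Q2i * Q2 = 1\<^sub>m s"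
    using invertible_inv[OF Q2(2) Q2(1)] by blast
  define I1 where "I1 = {i. i < min m s \<and> D1 $$ (i, i) \<noteq> 0}"
  have D1c: "D1 \<in> carrier_mat m s" using D1 P1 A Q1 by auto
  have D2c: "D2 \<in> carrier_mat m s" using D2 P2 A Q2 by auto
  have AQc: "A * Q1 \<in> carrier_mat m s" using A Q1 by simp
  have AQ1: "A * Q1 = P1i * D1"
  proof -
    have "P1i * D1 = P1i * ((P1 * A) * Q1)" using D1 by simp
    also have "\<dots> = P1i * (P1 * (A * Q1))" using P1 A Q1 by simp
    also have "\<dots> = (P1i * P1) * (A * Q1)" using assoc_mult_mat[OF P1i(1) P1(1) AQc] by (rule sym)
    also have "\<dots> = A * Q1" using P1i(3) left_mult_one_mat[OF AQc] by simp
    finally show ?thesis by simp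
  qed
  have D2W: "D2 * (Q2i * Q1) = (P2 * P1i) * D1"
  proof -
    have PA2: "P2 * A \<in> carrier_mat m s" using P2 A by simp
    have Wc': "Q2i * Q1 \<in> carrier_mat s s" using Q2i Q1 by simp
    have "D2 * (Q2i * Q1) = (P2 * A) * (Q2 * (Q2i * Q1))" unfolding D2 by (rule assoc_mult_mat[OF PA2 Q2(1) Wc'])
    also have "Q2 * (Q2i * Q1) = (Q2 * Q2i) * Q1" using assoc_mult_mat[OF Q2(1) Q2i(1) Q1(1)] by (rule sym)
    also have "\<dots> = Q1" using Q2i(2) left_mult_one_mat[OF Q1(1)] by simp
    also have "(P2 * A) * Q1 = P2 * (A * Q1)" by (rule assoc_mult_mat[OF P2(1) A Q1(1)])
    also have "\<dots> = P2 * (P1i * D1)" using AQ1 by simp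
    also have "\<dots> = (P2 * P1i) * D1" using assoc_mult_mat[OF P2(1) P1i(1) D1c] by (rule sym)
    finally show ?thesis .
  qed
  have Wc: "Q2i * Q1 \<in> carrier_mat s s" using Q2i Q1 by simp
  have detW: "det (Q2i * Q1) dvd 1"
  proof -
    have "det Q2i * det Q2 = 1" using det_mult[OF Q2i(1) Q2(1)] Q2i(3) by simp
    then have "det Q2i dvd 1" by (intro dvdI[of _ _ "det Q2"]) (simp add: mult.commute)
    moreover have "det Q1 dvd 1" by (rule invertible_det[OF Q1(2) Q1(1)])
    ultimately show ?thesis using det_mult[OF Q2i(1) Q1(1)] by simp
  qed
  have "r2 \<le> card I1"
    unfolding rr2
  proof (rule diag_rank_le[OF chain D2c Wc detW offd2])
    show "I1 \<subseteq> {..<s}" unfolding I1_def by auto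
  next
    fix i c assume ic: "i < m" "c < s" "c \<notin> I1"
    have PP: "P2 * P1i \<in> carrier_mat m m" using P2 P1i by simp
    have "((P2 * P1i) * D1) $$ (i, c) = (\<Sum>k<m. (P2 * P1i) $$ (i, k) * D1 $$ (k, c))"
      by (rule mult_entry[OF PP D1c ic(1,2)])
    also have "\<dots> = 0"
    proof (rule sum.neutral, rule ballI)
      fix k assume k: "k \<in> {..<m}"
      have "D1 $$ (k, c) = 0"
      proof (cases "k = c")
        case True then show ?thesis using ic k unfolding I1_def by auto
      next
        case False then show ?thesis using offd1 k ic by auto
      qed
      then show "(P2 * P1i) $$ (i, k) * D1 $$ (k, c) = 0" by simp
    qed
    finally show "(D2 * (Q2i * Q1)) $$ (i, c) = 0" using D2W by simp
  qed simp_all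
  then show ?thesis using rr1 I1_def by simp
qed

definition snf_ok :: "'a::comm_ring_1 mat \<Rightarrow> bool" where
  "snf_ok D \<longleftrightarrow> (\<forall>i j. i < dim_row D \<longrightarrow> j < dim_col D \<longrightarrow> i \<noteq> j \<longrightarrow> D $$ (i, j) = 0) \<and>
     (\<forall>i. Suc i < min (dim_row D) (dim_col D) \<longrightarrow> D $$ (i, i) dvd D $$ (Suc i, Suc i))"

definition eqv :: "'a::comm_ring_1 mat \<Rightarrow> 'a mat \<Rightarrow> bool" where
  "eqv A B \<longleftrightarrow> (\<exists>P Q. P \<in> carrier_mat (dim_row A) (dim_row A) \<and> invertible_mat P \<and>
     Q \<in> carrier_mat (dim_col A) (dim_col A) \<and> invertible_mat Q \<and> B = P * A * Q)"

lemma snf_from: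
  assumes "eqv (A :: 'a::comm_ring_1 mat) D" "snf_ok D"
  shows "snf_rank A (card {i. i < min (dim_row A) (dim_col A) \<and> D $$ (i, i) \<noteq> 0})"
proof -
  obtain P Q where PQ: "P \<in> carrier_mat (dim_row A) (dim_row A)" "invertible_mat P"
    "Q \<in> carrier_mat (dim_col A) (dim_col A)" "invertible_mat Q" "D = P * A * Q"
    using assms(1) unfolding eqv_def by blast
  have dims: "dim_row D = dim_row A" "dim_col D = dim_col A" using PQ by auto
  have o: "\<forall>i j. i < dim_row A \<longrightarrow> j < dim_col A \<longrightarrow> i \<noteq> j \<longrightarrow> D $$ (i, j) = 0"
    "\<forall>i. Suc i < min (dim_row A) (dim_col A) \<longrightarrow> D $$ (i, i) dvd D $$ (Suc i, Suc i)"
    using assms(2) unfolding snf_ok_def dims by blast+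
  show ?thesis unfolding snf_rank_def
    by (rule exI[of _ P], rule exI[of _ Q], rule exI[of _ D]) (intro conjI PQ o refl)
qed

lemma inv_intro:
  assumes "(P :: 'a::comm_ring_1 mat) \<in> carrier_mat n n" "Pv \<in> carrier_mat n n"
    "P * Pv = 1\<^sub>m n" "Pv * P = 1\<^sub>m n"
  shows "invertible_mat P"
  unfolding invertible_mat_def inverts_mat_def using assms by auto

lemma inv_one: "invertible_mat (1\<^sub>m n :: 'a::comm_ring_1 mat)"
  by (rule inv_intro[of _ n "1\<^sub>m n"]) auto

lemma inv_mult:
  assumes P: "(P :: 'a::comm_ring_1 mat) \<in> carrier_mat n n" "invertible_mat P"
    and R: "R \<in> carrier_mat n n" "invertible_mat R"
  shows "invertible_mat (P * R)"
proof -
  obtain Pv where Pv: "Pv \<in> carrier_mat n n" "P * Pv = 1\<^sub>m n" "Pv * P = 1\<^sub>m n"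
    using invertible_inv[OF P(2) P(1)] by blast
  obtain Ri where Ri: "Ri \<in> carrier_mat n n" "R * Ri = 1\<^sub>m n" "Ri * R = 1\<^sub>m n"
    using invertible_inv[OF R(2) R(1)] by blast
  have RP: "Ri * Pv \<in> carrier_mat n n" using Ri Pv by simp
  have PR: "P * R \<in> carrier_mat n n" using P R by simp
  have "(P * R) * (Ri * Pv) = P * (R * (Ri * Pv))" by (rule assoc_mult_mat[OF P(1) R(1) RP])
  also have "R * (Ri * Pv) = (R * Ri) * Pv" using assoc_mult_mat[OF R(1) Ri(1) Pv(1)] by (rule sym)
  also have "\<dots> = Pv" using Ri(2) left_mult_one_mat[OF Pv(1)] by simp
  finally have e1: "(P * R) * (Ri * Pv) = 1\<^sub>m n" using Pv(2) by simp
  have "(Ri * Pv) * (P * R) = Ri * (Pv * (P * R))" by (rule assoc_mult_mat[OF Ri(1) Pv(1) PR])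
  also have "Pv * (P * R) = (Pv * P) * R" using assoc_mult_mat[OF Pv(1) P(1) R(1)] by (rule sym)
  also have "\<dots> = R" using Pv(3) left_mult_one_mat[OF R(1)] by simp
  finally have e2: "(Ri * Pv) * (P * R) = 1\<^sub>m n" using Ri(3) by simp
  show ?thesis by (rule inv_intro[OF PR RP e1 e2])
qed

lemma eqv_refl:
  assumes "(A :: 'a::comm_ring_1 mat) \<in> carrier_mat m s"
  shows "eqv A A"
proof -
  have "A = 1\<^sub>m m * A * 1\<^sub>m s" using assms by simp
  then show ?thesis unfolding eqv_def using assms
    by (intro exI[of _ "1\<^sub>m m"] exI[of _ "1\<^sub>m s"] conjI inv_one) simp_all
qed

lemma eqv_left:
  assumes "(A :: 'a::comm_ring_1 mat) \<in> carrier_mat m s" "P \<in> carrier_mat m m" "invertible_mat P"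
  shows "eqv A (P * A)"
proof -
  have "P * A = P * A * 1\<^sub>m s" using assms by simp
  then show ?thesis unfolding eqv_def using assms
    by (intro exI[of _ P] exI[of _ "1\<^sub>m s"] conjI inv_one) simp_all
qed

lemma eqv_right:
  assumes "(A :: 'a::comm_ring_1 mat) \<in> carrier_mat m s" "Q \<in> carrier_mat s s" "invertible_mat Q"
  shows "eqv A (A * Q)"
proof -
  have "A * Q = 1\<^sub>m m * A * Q" using assms by simp
  then show ?thesis unfolding eqv_def using assms
    by (intro exI[of _ "1\<^sub>m m"] exI[of _ Q] conjI inv_one) simp_all
qed

lemma eqv_trans:
  assumes AB: "eqv (A :: 'a::comm_ring_1 mat) B" and BC: "eqv B C"
  shows "eqv A C"
proof -
  obtain P Q where P: "P \<in> carrier_mat (dim_row A) (dim_row A)" "invertible_mat P"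
    and Q: "Q \<in> carrier_mat (dim_col A) (dim_col A)" "invertible_mat Q" and B: "B = P * A * Q"
    using AB unfolding eqv_def by blast
  have dB: "dim_row B = dim_row A" "dim_col B = dim_col A" using P(1) Q(1) unfolding B by simp_all
  obtain P' Q' where P': "P' \<in> carrier_mat (dim_row A) (dim_row A)" "invertible_mat P'"
    and Q': "Q' \<in> carrier_mat (dim_col A) (dim_col A)" "invertible_mat Q'" and C: "C = P' * B * Q'"
    using BC unfolding eqv_def dB by blast
  have A: "A \<in> carrier_mat (dim_row A) (dim_col A)" unfolding carrier_mat_def by simp
  have PA: "P * A \<in> carrier_mat (dim_row A) (dim_col A)" by (rule mult_carrier_mat[OF P(1) A])
  have PPA: "(P' * P) * A \<in> carrier_mat (dim_row A) (dim_col A)"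
    by (rule mult_carrier_mat[OF mult_carrier_mat[OF P'(1) P(1)] A])
  have x1: "(P' * P) * A = P' * (P * A)" by (rule assoc_mult_mat[OF P'(1) P(1) A])
  have x2: "(P' * (P * A)) * Q = P' * ((P * A) * Q)" by (rule assoc_mult_mat[OF P'(1) PA Q(1)])
  have x3: "((P' * P) * A) * Q * Q' = ((P' * P) * A) * (Q * Q')" by (rule assoc_mult_mat[OF PPA Q(1) Q'(1)])
  have CC: "C = (P' * P) * A * (Q * Q')"
    unfolding C B x2[symmetric] x1[symmetric] x3 by (rule refl)
  have i1: "invertible_mat (P' * P)" by (rule inv_mult[OF P'(1,2) P(1,2)])
  have i2: "invertible_mat (Q * Q')" by (rule inv_mult[OF Q(1,2) Q'(1,2)])
  have c1: "P' * P \<in> carrier_mat (dim_row A) (dim_row A)" by (rule mult_carrier_mat[OF P'(1) P(1)])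
  have c2: "Q * Q' \<in> carrier_mat (dim_col A) (dim_col A)" by (rule mult_carrier_mat[OF Q(1) Q'(1)])
  show ?thesis unfolding eqv_def
    by (intro exI[of _ "P' * P"] exI[of _ "Q * Q'"] conjI i1 i2 c1 c2 CC)
qed

lemma dvd_left:
  assumes "(A :: 'a::comm_ring_1 mat) \<in> carrier_mat m s" "P \<in> carrier_mat m' m"
    "\<And>i j. i < m \<Longrightarrow> j < s \<Longrightarrow> a dvd A $$ (i, j)" "i < m'" "j < s"
  shows "a dvd (P * A) $$ (i, j)"
  unfolding mult_entry[OF assms(2,1) assms(4,5)]
  by (rule dvd_sum, rule dvd_mult, rule assms(3)) (use assms in auto)

lemma dvd_right:
  assumes "(A :: 'a::comm_ring_1 mat) \<in> carrier_mat m s" "Q \<in> carrier_mat s s'"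
    "\<And>i j. i < m \<Longrightarrow> j < s \<Longrightarrow> a dvd A $$ (i, j)" "i < m" "j < s'"
  shows "a dvd (A * Q) $$ (i, j)"
  unfolding mult_entry[OF assms(1,2) assms(4,5)]
  by (rule dvd_sum, rule dvd_mult2, rule assms(3)) (use assms in auto)

lemma pivot_exists:
  assumes chain: "\<And>x y::'a::comm_ring_1. x dvd y \<or> y dvd x"
    and "finite X" "X \<noteq> {}"
  shows "\<exists>x\<in>X. \<forall>y\<in>X. (f x :: 'a) dvd f y"
  using assms(2,3)
proof (induction X rule: finite_ne_induct)
  case (singleton x) then show ?case by simp
next
  case (insert x F)
  then obtain z where z: "z \<in> F" "\<forall>y\<in>F. f z dvd f y" by blast
  from chain[of "f x" "f z"] show ?case
  proof
    assume "f x dvd f z"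
    then have "\<forall>y\<in>F. f x dvd f y" using z(2) dvd_trans[of "f x" "f z"] by blast
    then have "\<forall>y\<in>insert x F. f x dvd f y" by simp
    then show ?thesis by blast
  next
    assume "f z dvd f x"
    then have "\<forall>y\<in>insert x F. f z dvd f y" using z(2) by simp
    then show ?thesis using z(1) by blast
  qed
qed

lemma swap_left_entry:
  assumes "(A :: 'a::comm_ring_1 mat) \<in> carrier_mat m s" "k < m" "l < m" "i < m" "j < s"
  shows "(swaprows_mat m k l * A) $$ (i, j) = A $$ (if i = k then l else if i = l then k else i, j)"
  using assms swaprows_mat[OF assms(1-3), symmetric] by auto

lemma swap_col:
  assumes "u < s" "j < s"
  shows "(swaprows_mat s k l :: 'a::comm_ring_1 mat) $$ (u, j)
     = (if u = (if j = k then l else if j = l then k else j) then 1 else 0)"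
  using assms by (cases "j = k"; cases "j = l") auto

lemma swap_right_entry:
  assumes "(A :: 'a::comm_ring_1 mat) \<in> carrier_mat m s" "k < s" "l < s" "i < m" "j < s"
  shows "(A * swaprows_mat s k l) $$ (i, j) = A $$ (i, if j = k then l else if j = l then k else j)"
proof -
  define t where "t = (if j = k then l else if j = l then k else j)"
  have ts: "t < s" using assms unfolding t_def by auto
  have sc: "\<And>u. u < s \<Longrightarrow> (swaprows_mat s k l :: 'a mat) $$ (u, j) = (if u = t then 1 else 0)"
    unfolding t_def by (rule swap_col[OF _ assms(5)])
  have "(A * swaprows_mat s k l) $$ (i, j) = (\<Sum>u<s. A $$ (i, u) * swaprows_mat s k l $$ (u, j))"
    by (rule mult_entry[OF assms(1) swaprows_mat_carrier assms(4) assms(5)])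
  also have "\<dots> = A $$ (i, t) * swaprows_mat s k l $$ (t, j)"
    using sc ts by (intro sum_single) (auto simp del: index_mat_swaprows_mat)
  also have "\<dots> = A $$ (i, t)" using sc[OF ts] by (simp del: index_mat_swaprows_mat)
  finally show ?thesis unfolding t_def .
qed

lemma swap_inv:
  assumes "k < n" "l < n"
  shows "invertible_mat (swaprows_mat n k l :: 'a::comm_ring_1 mat)"
  by (rule inv_intro[of _ n "swaprows_mat n k l"]) (use swaprows_mat_inv[OF assms] in auto)

lemma inv_one_plus:
  assumes E: "(E :: 'a::comm_ring_1 mat) \<in> carrier_mat n n" and E': "E' \<in> carrier_mat n n"
    and z1: "\<And>i j. i < n \<Longrightarrow> j < n \<Longrightarrow> (E * E') $$ (i, j) = 0"
    and z2: "\<And>i j. i < n \<Longrightarrow> j < n \<Longrightarrow> (E' * E) $$ (i, j) = 0"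
    and z3: "\<And>i j. i < n \<Longrightarrow> j < n \<Longrightarrow> E $$ (i, j) + E' $$ (i, j) = 0"
  shows "invertible_mat (1\<^sub>m n + E)"
proof -
  have o: "1\<^sub>m n \<in> carrier_mat n n" by simp
  have L: "1\<^sub>m n + E \<in> carrier_mat n n" using E by simp
  have R: "1\<^sub>m n + E' \<in> carrier_mat n n" using E' by simp
  have e1: "(1\<^sub>m n + E) * (1\<^sub>m n + E') = 1\<^sub>m n"
  proof -
    have "(1\<^sub>m n + E) * (1\<^sub>m n + E') = 1\<^sub>m n * (1\<^sub>m n + E') + E * (1\<^sub>m n + E')"
      by (rule add_mult_distrib_mat[OF o E R])
    also have "E * (1\<^sub>m n + E') = E * 1\<^sub>m n + E * E'" by (rule mult_add_distrib_mat[OF E o E'])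
    finally have "(1\<^sub>m n + E) * (1\<^sub>m n + E') = (1\<^sub>m n + E') + (E + E * E')"
      using left_mult_one_mat[OF R] right_mult_one_mat[OF E] by simp
    also have "\<dots> = 1\<^sub>m n"
    proof (rule eq_matI)
      fix i j assume "i < dim_row (1\<^sub>m n :: 'a mat)" "j < dim_col (1\<^sub>m n :: 'a mat)"
      then have ij: "i < n" "j < n" by simp_all
      have e: "E' $$ (i, j) = - E $$ (i, j)" using z3[OF ij] by (simp add: eq_neg_iff_add_eq_0 add.commute)
      show "(1\<^sub>m n + E' + (E + E * E')) $$ (i, j) = 1\<^sub>m n $$ (i, j)"
        using ij E E' z1[OF ij] e by simp
    qed (use E E' in simp_all)
    finally show ?thesis .
  qed
  have e2: "(1\<^sub>m n + E') * (1\<^sub>m n + E) = 1\<^sub>m n"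
  proof -
    have "(1\<^sub>m n + E') * (1\<^sub>m n + E) = 1\<^sub>m n * (1\<^sub>m n + E) + E' * (1\<^sub>m n + E)"
      by (rule add_mult_distrib_mat[OF o E' L])
    also have "E' * (1\<^sub>m n + E) = E' * 1\<^sub>m n + E' * E" by (rule mult_add_distrib_mat[OF E' o E])
    finally have "(1\<^sub>m n + E') * (1\<^sub>m n + E) = (1\<^sub>m n + E) + (E' + E' * E)"
      using left_mult_one_mat[OF L] right_mult_one_mat[OF E'] by simp
    also have "\<dots> = 1\<^sub>m n"
    proof (rule eq_matI)
      fix i j assume "i < dim_row (1\<^sub>m n :: 'a mat)" "j < dim_col (1\<^sub>m n :: 'a mat)"
      then have ij: "i < n" "j < n" by simp_all
      have e: "E' $$ (i, j) = - E $$ (i, j)" using z3[OF ij] by (simp add: eq_neg_iff_add_eq_0 add.commute)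
      show "(1\<^sub>m n + E + (E' + E' * E)) $$ (i, j) = 1\<^sub>m n $$ (i, j)"
        using ij E E' z2[OF ij] e by simp
    qed (use E E' in simp_all)
    finally show ?thesis .
  qed
  show ?thesis by (rule inv_intro[OF L R e1 e2])
qed

lemma inv_block:
  assumes P: "(P :: 'a::comm_ring_1 mat) \<in> carrier_mat n n" "invertible_mat P"
  shows "invertible_mat (four_block_mat (1\<^sub>m 1) (0\<^sub>m 1 n) (0\<^sub>m n 1) P)"
proof -
  obtain Pv where Pv: "Pv \<in> carrier_mat n n" "P * Pv = 1\<^sub>m n" "Pv * P = 1\<^sub>m n"
    using invertible_inv[OF P(2) P(1)] by blast
  have one: "four_block_mat (1\<^sub>m 1) (0\<^sub>m 1 n) (0\<^sub>m n 1) (1\<^sub>m n) = (1\<^sub>m (1 + n) :: 'a mat)"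
    by (rule eq_matI) auto
  have c1: "four_block_mat (1\<^sub>m 1) (0\<^sub>m 1 n) (0\<^sub>m n 1) P \<in> carrier_mat (1 + n) (1 + n)" by (rule four_block_carrier_mat) (use P in auto)
  have c2: "four_block_mat (1\<^sub>m 1) (0\<^sub>m 1 n) (0\<^sub>m n 1) Pv \<in> carrier_mat (1 + n) (1 + n)" by (rule four_block_carrier_mat) (use Pv in auto)
  have e1: "four_block_mat (1\<^sub>m 1) (0\<^sub>m 1 n) (0\<^sub>m n 1) P * four_block_mat (1\<^sub>m 1) (0\<^sub>m 1 n) (0\<^sub>m n 1) Pv
    = 1\<^sub>m (1 + n)"
    by (subst mult_four_block_mat[OF one_carrier_mat zero_carrier_mat zero_carrier_mat P(1)
        one_carrier_mat zero_carrier_mat zero_carrier_mat Pv(1)]) (use P(1) Pv(1,2) one in simp)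
  have e2: "four_block_mat (1\<^sub>m 1) (0\<^sub>m 1 n) (0\<^sub>m n 1) Pv * four_block_mat (1\<^sub>m 1) (0\<^sub>m 1 n) (0\<^sub>m n 1) P
    = 1\<^sub>m (1 + n)"
    by (subst mult_four_block_mat[OF one_carrier_mat zero_carrier_mat zero_carrier_mat Pv(1)
        one_carrier_mat zero_carrier_mat zero_carrier_mat P(1)]) (use P(1) Pv(1,3) one in simp)
  show ?thesis by (rule inv_intro[OF c1 c2 e1 e2])
qed

lemma block_mult:
  assumes X: "(X :: 'a::comm_ring_1 mat) \<in> carrier_mat 1 1" and A: "A \<in> carrier_mat m s"
    and P: "P \<in> carrier_mat m m" and Q: "Q \<in> carrier_mat s s"
  shows "four_block_mat (1\<^sub>m 1) (0\<^sub>m 1 m) (0\<^sub>m m 1) P * four_block_mat X (0\<^sub>m 1 s) (0\<^sub>m m 1) A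
     * four_block_mat (1\<^sub>m 1) (0\<^sub>m 1 s) (0\<^sub>m s 1) Q = four_block_mat X (0\<^sub>m 1 s) (0\<^sub>m m 1) (P * A * Q)"
proof -
  have "four_block_mat (1\<^sub>m 1) (0\<^sub>m 1 m) (0\<^sub>m m 1) P * four_block_mat X (0\<^sub>m 1 s) (0\<^sub>m m 1) A
     = four_block_mat X (0\<^sub>m 1 s) (0\<^sub>m m 1) (P * A)"
    by (subst mult_four_block_mat[OF one_carrier_mat zero_carrier_mat zero_carrier_mat P
        X zero_carrier_mat zero_carrier_mat A]) (use X A P in simp)
  moreover have "four_block_mat X (0\<^sub>m 1 s) (0\<^sub>m m 1) (P * A) * four_block_mat (1\<^sub>m 1) (0\<^sub>m 1 s) (0\<^sub>m s 1) Q
     = four_block_mat X (0\<^sub>m 1 s) (0\<^sub>m m 1) (P * A * Q)"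
    by (subst mult_four_block_mat[OF X zero_carrier_mat zero_carrier_mat mult_carrier_mat[OF P A]
        one_carrier_mat zero_carrier_mat zero_carrier_mat Q]) (use X A P Q in simp)
  ultimately show ?thesis by simp
qed

lemma snf_ok_triv:
  assumes "dim_row (A :: 'a::comm_ring_1 mat) = 0 \<or> dim_col A = 0"
  shows "snf_ok A"
  using assms unfolding snf_ok_def by auto

lemma snf_exists:
  assumes chain: "\<And>x y::'a::comm_ring_1. x dvd y \<or> y dvd x"
  shows "(A :: 'a mat) \<in> carrier_mat m s \<Longrightarrow> \<exists>D. eqv A D \<and> snf_ok D"
proof (induction m arbitrary: s A)
  case 0
  then show ?case using eqv_refl[OF 0] snf_ok_triv[of A] by auto
next
  case (Suc m')
  note Ac = Suc.prems
  show ?case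
  proof (cases s)
    case 0
    then show ?thesis using eqv_refl[OF Ac] snf_ok_triv[of A] Ac by auto
  next
    case (Suc s')
    define m where "m = Suc m'"
    have Am: "A \<in> carrier_mat m s" using Ac m_def by simp
    show ?thesis
    proof (cases "\<forall>i<m. \<forall>j<s. A $$ (i, j) = 0")
      case True
      have "snf_ok A" unfolding snf_ok_def using True Am by auto
      then show ?thesis using eqv_refl[OF Am] by blast
    next
      case False
      have "\<exists>x\<in>{0..<m} \<times> {0..<s}. \<forall>y\<in>{0..<m} \<times> {0..<s}. A $$ x dvd A $$ y"
        by (rule pivot_exists[OF chain]) (use Suc m_def in auto)
      then obtain i0 j0 where ij0: "i0 < m" "j0 < s"
        and piv: "\<And>i j. i < m \<Longrightarrow> j < s \<Longrightarrow> A $$ (i0, j0) dvd A $$ (i, j)" by auto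
      define a where "a = A $$ (i0, j0)"
      have m0: "0 < m" and s0: "0 < s" using Suc m_def by auto
      define S1 :: "'a mat" where "S1 = swaprows_mat m 0 i0"
      define S2 :: "'a mat" where "S2 = swaprows_mat s 0 j0"
      have S1c: "S1 \<in> carrier_mat m m" and S2c: "S2 \<in> carrier_mat s s" unfolding S1_def S2_def by simp_all
      have S1A: "S1 * A \<in> carrier_mat m s" using S1c Am by simp
      define A1 where "A1 = S1 * A * S2"
      have A1c: "A1 \<in> carrier_mat m s" unfolding A1_def using S1A S2c by simp
      have A1e: "A1 $$ (i, j) = A $$ (if i = 0 then i0 else if i = i0 then 0 else i,
                                       if j = 0 then j0 else if j = j0 then 0 else j)"
        if "i < m" "j < s" for i j
      proof -
        have "A1 $$ (i, j) = (S1 * A) $$ (i, if j = 0 then j0 else if j = j0 then 0 else j)"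
          unfolding A1_def S2_def by (rule swap_right_entry[OF S1A s0 ij0(2) that])
        also have "\<dots> = A $$ (if i = 0 then i0 else if i = i0 then 0 else i,
                                       if j = 0 then j0 else if j = j0 then 0 else j)"
          unfolding S1_def by (rule swap_left_entry[OF Am m0 ij0(1) that(1)]) (use that s0 ij0 in auto)
        finally show ?thesis .
      qed
      have a1: "A1 $$ (0, 0) = a" using A1e[OF m0 s0] a_def by simp
      have dvd1: "a dvd A1 $$ (i, j)" if "i < m" "j < s" for i j
        unfolding A1e[OF that] a_def by (rule piv) (use that m0 s0 ij0 in auto)
      have eqv1: "eqv A A1"
        unfolding A1_def
        by (rule eqv_trans[OF eqv_left[OF Am S1c] eqv_right[OF S1A S2c]])
          (use swap_inv[OF m0 ij0(1)] swap_inv[OF s0 ij0(2)] S1_def S2_def in simp_all)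
      define b where "b i j = (SOME x. A1 $$ (i, j) = a * x)" for i j
      have bp: "A1 $$ (i, j) = a * b i j" if ij: "i < m" "j < s" for i j
      proof -
        obtain x where "A1 $$ (i, j) = a * x" using dvd1[OF ij] by (elim dvdE)
        then show ?thesis unfolding b_def by (rule someI)
      qed
      define E :: "'a mat" where "E = mat m m (\<lambda>(i, k). if k = 0 \<and> i \<noteq> 0 then - b i 0 else 0)"
      define E' :: "'a mat" where "E' = mat m m (\<lambda>(i, k). if k = 0 \<and> i \<noteq> 0 then b i 0 else 0)"
      have Ec: "E \<in> carrier_mat m m" and E'c: "E' \<in> carrier_mat m m" unfolding E_def E'_def by simp_all
      have invL: "invertible_mat (1\<^sub>m m + E)"
      proof (rule inv_one_plus[OF Ec E'c])
        fix i j assume ij: "i < m" "j < m"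
        show "(E * E') $$ (i, j) = 0" unfolding mult_entry[OF Ec E'c ij]
          by (rule sum.neutral) (use ij in \<open>auto simp: E_def E'_def\<close>)
        show "(E' * E) $$ (i, j) = 0" unfolding mult_entry[OF E'c Ec ij]
          by (rule sum.neutral) (use ij in \<open>auto simp: E_def E'_def\<close>)
        show "E $$ (i, j) + E' $$ (i, j) = 0" using ij by (simp add: E_def E'_def)
      qed
      define A2 where "A2 = (1\<^sub>m m + E) * A1"
      have Lc: "1\<^sub>m m + E \<in> carrier_mat m m" using Ec by simp
      have A2c: "A2 \<in> carrier_mat m s" unfolding A2_def using Lc A1c by simp
      have A2e: "A2 $$ (i, j) = A1 $$ (i, j) + (if i \<noteq> 0 then - b i 0 else 0) * A1 $$ (0, j)"
        if ij: "i < m" "j < s" for i j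
      proof -
        have "A2 = 1\<^sub>m m * A1 + E * A1" unfolding A2_def
          by (rule add_mult_distrib_mat[OF one_carrier_mat Ec A1c])
        then have "A2 = A1 + E * A1" using left_mult_one_mat[OF A1c] by simp
        moreover have "(E * A1) $$ (i, j) = (if i \<noteq> 0 then - b i 0 else 0) * A1 $$ (0, j)"
        proof -
          have "(E * A1) $$ (i, j) = (\<Sum>k<m. E $$ (i, k) * A1 $$ (k, j))"
            by (rule mult_entry[OF Ec A1c ij])
          also have "\<dots> = E $$ (i, 0) * A1 $$ (0, j)"
            by (rule sum_single) (use ij m0 in \<open>auto simp: E_def\<close>)
          also have "\<dots> = (if i \<noteq> 0 then - b i 0 else 0) * A1 $$ (0, j)"
            using ij m0 by (simp add: E_def)
          finally show ?thesis .
        qed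
        ultimately show ?thesis using ij A1c Ec by simp
      qed
      have A2r0: "A2 $$ (0, j) = A1 $$ (0, j)" if "j < s" for j using A2e[OF m0 that] by simp
      have A2c0: "A2 $$ (i, 0) = 0" if "i < m" "i \<noteq> 0" for i
      proof -
        have "A2 $$ (i, 0) = a * b i 0 + (- b i 0) * a" using A2e[OF that(1) s0] bp[OF that(1) s0] a1 that(2) by simp
        then show ?thesis by (simp add: mult.commute)
      qed
      have eqv2: "eqv A1 A2" unfolding A2_def by (rule eqv_left[OF A1c Lc invL])
      define F :: "'a mat" where "F = mat s s (\<lambda>(k, j). if k = 0 \<and> j \<noteq> 0 then - b 0 j else 0)"
      define F' :: "'a mat" where "F' = mat s s (\<lambda>(k, j). if k = 0 \<and> j \<noteq> 0 then b 0 j else 0)"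
      have Fc: "F \<in> carrier_mat s s" and F'c: "F' \<in> carrier_mat s s" unfolding F_def F'_def by simp_all
      have invU: "invertible_mat (1\<^sub>m s + F)"
      proof (rule inv_one_plus[OF Fc F'c])
        fix i j assume ij: "i < s" "j < s"
        show "(F * F') $$ (i, j) = 0" unfolding mult_entry[OF Fc F'c ij]
          by (rule sum.neutral) (use ij in \<open>auto simp: F_def F'_def\<close>)
        show "(F' * F) $$ (i, j) = 0" unfolding mult_entry[OF F'c Fc ij]
          by (rule sum.neutral) (use ij in \<open>auto simp: F_def F'_def\<close>)
        show "F $$ (i, j) + F' $$ (i, j) = 0" using ij by (simp add: F_def F'_def)
      qed
      define A3 where "A3 = A2 * (1\<^sub>m s + F)"
      have Uc: "1\<^sub>m s + F \<in> carrier_mat s s" using Fc by simp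
      have A3c: "A3 \<in> carrier_mat m s" unfolding A3_def using A2c Uc by simp
      have A3e: "A3 $$ (i, j) = A2 $$ (i, j) + A2 $$ (i, 0) * (if j \<noteq> 0 then - b 0 j else 0)"
        if ij: "i < m" "j < s" for i j
      proof -
        have "A3 = A2 * 1\<^sub>m s + A2 * F" unfolding A3_def
          by (rule mult_add_distrib_mat[OF A2c one_carrier_mat Fc])
        then have "A3 = A2 + A2 * F" using right_mult_one_mat[OF A2c] by simp
        moreover have "(A2 * F) $$ (i, j) = A2 $$ (i, 0) * (if j \<noteq> 0 then - b 0 j else 0)"
        proof -
          have "(A2 * F) $$ (i, j) = (\<Sum>k<s. A2 $$ (i, k) * F $$ (k, j))"
            by (rule mult_entry[OF A2c Fc ij])
          also have "\<dots> = A2 $$ (i, 0) * F $$ (0, j)"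
            by (rule sum_single) (use ij s0 in \<open>auto simp: F_def\<close>)
          also have "\<dots> = A2 $$ (i, 0) * (if j \<noteq> 0 then - b 0 j else 0)"
            using ij s0 by (simp add: F_def)
          finally show ?thesis .
        qed
        ultimately show ?thesis using ij A2c Fc by simp
      qed
      have A300: "A3 $$ (0, 0) = a" using A3e[OF m0 s0] A2r0[OF s0] a1 by simp
      have A30j: "A3 $$ (0, j) = 0" if "j < s" "j \<noteq> 0" for j
      proof -
        have "A3 $$ (0, j) = a * b 0 j + a * (- b 0 j)"
          using A3e[OF m0 that(1)] A2r0[OF that(1)] A2r0[OF s0] a1 bp[OF m0 that(1)] that(2) by simp
        then show ?thesis by simp
      qed
      have A3i0: "A3 $$ (i, 0) = 0" if "i < m" "i \<noteq> 0" for i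
        using A3e[OF that(1) s0] A2c0[OF that] by simp
      have dvd3: "a dvd A3 $$ (i, j)" if "i < m" "j < s" for i j
        unfolding A3_def A2_def
        by (rule dvd_right[OF mult_carrier_mat[OF Lc A1c] Uc _ that])
           (rule dvd_left[OF A1c Lc dvd1], auto)
      have eqv3: "eqv A2 A3" unfolding A3_def by (rule eqv_right[OF A2c Uc invU])
      define A' where "A' = mat m' s' (\<lambda>(i, j). A3 $$ (Suc i, Suc j))"
      have A'c: "A' \<in> carrier_mat m' s'" unfolding A'_def by simp
      have A3b': "four_block_mat (mat 1 1 (\<lambda>_. a)) (0\<^sub>m 1 s') (0\<^sub>m m' 1) A' = A3"
      proof (rule eq_matI)
        fix i j assume "i < dim_row A3" "j < dim_col A3"
        then have ij: "i < m" "j < s" using A3c by auto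
        show "four_block_mat (mat 1 1 (\<lambda>_. a)) (0\<^sub>m 1 s') (0\<^sub>m m' 1) A' $$ (i, j) = A3 $$ (i, j)"
        proof (cases "i = 0")
          case True
          then show ?thesis using ij A300 A30j A'c Suc by (cases "j = 0") auto
        next
          case False
          then obtain i' where i': "i = Suc i'" by (cases i) auto
          show ?thesis
          proof (cases "j = 0")
            case True
            then show ?thesis using ij A3i0 False A'c Suc m_def by auto
          next
            case False
            then obtain j' where j': "j = Suc j'" by (cases j) auto
            show ?thesis using ij i' j' A'c m_def Suc by (simp add: A'_def)
          qed
        qed
      qed (use A3c A'c m_def Suc in auto)
      note A3b = A3b'[symmetric]
      have dvdA': "a dvd A' $$ (i, j)" if "i < m'" "j < s'" for i j
        using dvd3[of "Suc i" "Suc j"] that m_def Suc by (simp add: A'_def)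
      obtain D' where D': "eqv A' D'" "snf_ok D'" using Suc.IH[OF A'c] by blast
      obtain P' Q' where P': "P' \<in> carrier_mat m' m'" "invertible_mat P'"
        and Q': "Q' \<in> carrier_mat s' s'" "invertible_mat Q'" and D'e: "D' = P' * A' * Q'"
        using D'(1) A'c unfolding eqv_def by auto
      have D'c: "D' \<in> carrier_mat m' s'" unfolding D'e using P' A'c Q' by simp
      have dvdD': "a dvd D' $$ (i, j)" if "i < m'" "j < s'" for i j
        unfolding D'e
        by (rule dvd_right[OF mult_carrier_mat[OF P'(1) A'c] Q'(1) _ that])
           (rule dvd_left[OF A'c P'(1) dvdA'], auto)
      define Pb :: "'a mat" where "Pb = four_block_mat (1\<^sub>m 1) (0\<^sub>m 1 m') (0\<^sub>m m' 1) P'"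
      define Qb :: "'a mat" where "Qb = four_block_mat (1\<^sub>m 1) (0\<^sub>m 1 s') (0\<^sub>m s' 1) Q'"
      define D where "D = four_block_mat (mat 1 1 (\<lambda>_. a)) (0\<^sub>m 1 s') (0\<^sub>m m' 1) D'"
      have X: "mat 1 1 (\<lambda>_. a) \<in> carrier_mat 1 1" by simp
      have DPQ: "D = Pb * A3 * Qb" unfolding D_def Pb_def Qb_def A3b D'e
        by (rule block_mult[OF X A'c P'(1) Q'(1), symmetric])
      have Pbc: "Pb \<in> carrier_mat m m" unfolding Pb_def m_def
        using four_block_carrier_mat[OF one_carrier_mat[of 1] P'(1), of "0\<^sub>m 1 m'" "0\<^sub>m m' 1"] by simp
      have Qbc: "Qb \<in> carrier_mat s s" unfolding Qb_def
        using four_block_carrier_mat[OF one_carrier_mat[of 1] Q'(1), of "0\<^sub>m 1 s'" "0\<^sub>m s' 1"] Suc by simp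
      have eqv4: "eqv A3 D" unfolding DPQ
        by (rule eqv_trans[OF eqv_left[OF A3c Pbc] eqv_right[OF mult_carrier_mat[OF Pbc A3c] Qbc]])
          (use inv_block[OF P'] inv_block[OF Q'] Pb_def Qb_def in simp_all)
      have Dc: "D \<in> carrier_mat m s" unfolding D_def
        using four_block_carrier_mat[OF X D'c, of "0\<^sub>m 1 s'" "0\<^sub>m m' 1"] m_def Suc by simp
      have De: "D $$ (i, j) = (if i = 0 then (if j = 0 then a else 0) else
                   if j = 0 then 0 else D' $$ (i - 1, j - 1))" if "i < m" "j < s" for i j
        using that D'c m_def Suc unfolding D_def by auto
      have ok: "snf_ok D"
        unfolding snf_ok_def
      proof (intro conjI allI impI)
        fix i j assume ij: "i < dim_row D" "j < dim_col D" "i \<noteq> j"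
        then have ij': "i < m" "j < s" using Dc by auto
        show "D $$ (i, j) = 0"
        proof (cases "i = 0 \<or> j = 0")
          case True then show ?thesis using De[OF ij'] ij(3) by auto
        next
          case False
          then have "D $$ (i, j) = D' $$ (i - 1, j - 1)" using De[OF ij'] by simp
          also have "\<dots> = 0" using D'(2) D'c ij' ij(3) False m_def Suc unfolding snf_ok_def by auto
          finally show ?thesis .
        qed
      next
        fix i assume i: "Suc i < min (dim_row D) (dim_col D)"
        then have i': "Suc i < m" "Suc i < s" using Dc by auto
        show "D $$ (i, i) dvd D $$ (Suc i, Suc i)"
        proof (cases "i = 0")
          case True
          then show ?thesis using De[OF i'] De[of 0 0] i' dvdD'[of 0 0] m_def Suc by auto
        next
          case False
          from False obtain k where k: "i = Suc k" by (cases i) auto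
          have "Suc k < min (dim_row D') (dim_col D')" using D'c i' k m_def Suc by simp
          then have "D' $$ (k, k) dvd D' $$ (Suc k, Suc k)"
            using D'(2) unfolding snf_ok_def by blast
          then show ?thesis using De[OF i'] De[of i i] i' k by auto
        qed
      qed
      have "eqv A D" using eqv_trans[OF eqv1 eqv_trans[OF eqv2 eqv_trans[OF eqv3 eqv4]]] .
      then show ?thesis using ok by blast
    qed
  qed
qed

lemma mat_rank_eq:
  assumes chain: "\<And>x y::'a::comm_ring_1. x dvd y \<or> y dvd x"
    and A: "(A :: 'a mat) \<in> carrier_mat m s"
  shows "snf_rank A (mat_rank A)"
proof -
  obtain D where D: "eqv A D" "snf_ok D" using snf_exists[OF chain A] by blast
  define r0 where "r0 = card {i. i < min (dim_row A) (dim_col A) \<and> D $$ (i, i) \<noteq> 0}"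
  have r0: "snf_rank A r0" unfolding r0_def by (rule snf_from[OF D])
  have "mat_rank A = r0" unfolding mat_rank_def
  proof (rule the_equality)
    show "snf_rank A r0" by (rule r0)
  next
    fix r assume "snf_rank A r"
    then show "r = r0" using snf_rank_unique[OF chain A r0] snf_rank_unique[OF chain A _ r0] by (meson antisym)
  qed
  then show ?thesis using r0 by simp
qed

lemma rk_block_le:
  assumes chain: "\<And>x y::'a::comm_ring_1. x dvd y \<or> y dvd x"
  shows "rk_block m (u :: nat \<Rightarrow> 'a poly) a s \<le> card {j. j < s \<and> u (a + j) \<noteq> 0}"
proof -
  have Ac: "coeff_mat m u a s \<in> carrier_mat m s" unfolding coeff_mat_def by simp
  show ?thesis unfolding rk_block_def
  proof (rule snf_rank_le[OF chain Ac _ _ mat_rank_eq[OF chain Ac]])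
    show "{j. j < s \<and> u (a + j) \<noteq> 0} \<subseteq> {..<s}" by auto
  next
    fix i c assume "i < m" "c < s" "c \<notin> {j. j < s \<and> u (a + j) \<noteq> 0}"
    then show "coeff_mat m u a s $$ (i, c) = 0" unfolding coeff_mat_def by simp
  qed
qed

lemma chain_dvd:
  assumes "finite_chain_ring TYPE('a::comm_ring_1)"
  shows "(x::'a) dvd y \<or> y dvd x"
proof -
  have id: "cr_ideal {r * z | r. True}" for z :: 'a
    unfolding cr_ideal_def
  proof (intro conjI ballI allI)
    show "0 \<in> {r * z | r. True}" by (rule CollectI, rule exI[of _ 0]) simp
  next
    fix a b assume "a \<in> {r * z | r. True}" "b \<in> {r * z | r. True}"
    then obtain ra rb where "a = ra * z" "b = rb * z" by blast
    then have "a + b = (ra + rb) * z" by (simp add: distrib_right)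
    then show "a + b \<in> {r * z | r. True}" by blast
  next
    fix a s assume "a \<in> {r * z | r. True}"
    then obtain ra where "a = ra * z" by blast
    then have "s * a = (s * ra) * z" by (simp add: mult.assoc)
    then show "s * a \<in> {r * z | r. True}" by blast
  qed
  from assms have "{r * x | r. True} \<subseteq> {r * y | r. True} \<or> {r * y | r. True} \<subseteq> {r * x | r. True}"
    unfolding finite_chain_ring_def using id by blast
  then show ?thesis
  proof
    assume "{r * x | r. True} \<subseteq> {r * y | r. True}"
    then have "x \<in> {r * y | r. True}" by (metis (mono_tags, lifting) mem_Collect_eq mult_1 subsetD)
    then show ?thesis by auto
  next
    assume "{r * y | r. True} \<subseteq> {r * x | r. True}"
    then have "y \<in> {r * x | r. True}" by (metis (mono_tags, lifting) mem_Collect_eq mult_1 subsetD)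
    then show ?thesis by auto
  qed
qed

lemma card_split:
  fixes x S :: nat
  shows "card {j. j < x + S \<and> Q j} = card {j. j < x \<and> Q j} + card {j. j < S \<and> Q (x + j)}"
proof -
  have "{j. j < x + S \<and> Q j} = {j. j < x \<and> Q j} \<union> (\<lambda>j. x + j) ` {j. j < S \<and> Q (x + j)}"
  proof (intro equalityI subsetI)
    fix j assume j: "j \<in> {j. j < x + S \<and> Q j}"
    show "j \<in> {j. j < x \<and> Q j} \<union> (\<lambda>j. x + j) ` {j. j < S \<and> Q (x + j)}"
    proof (cases "j < x")
      case True then show ?thesis using j by blast
    next
      case False
      then have e: "j = x + (j - x)" by simp
      have "j - x \<in> {j. j < S \<and> Q (x + j)}" using j False by auto
      then show ?thesis using e by blast
    qed
  next
    fix j assume "j \<in> {j. j < x \<and> Q j} \<union> (\<lambda>j. x + j) ` {j. j < S \<and> Q (x + j)}"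
    then show "j \<in> {j. j < x + S \<and> Q j}" by auto
  qed
  moreover have "card ((\<lambda>j. x + j) ` {j. j < S \<and> Q (x + j)}) = card {j. j < S \<and> Q (x + j)}"
    by (rule card_image) (auto simp: inj_on_def)
  moreover have "{j. j < x \<and> Q j} \<inter> (\<lambda>j. x + j) ` {j. j < S \<and> Q (x + j)} = {}" by auto
  ultimately show ?thesis by (simp add: card_Un_disjoint)
qed

lemma partition_card:
  fixes ns :: "nat list"
  shows "(\<Sum>b<length ns. card {j. j < ns ! b \<and> P (a + sum_list (take b ns) + j)})
     = card {j. j < sum_list ns \<and> P (a + j)}"
proof (induction ns arbitrary: a)
  case Nil
  then show ?case by auto
next
  case (Cons x xs)
  have "(\<Sum>b<length (x # xs). card {j. j < (x # xs) ! b \<and> P (a + sum_list (take b (x # xs)) + j)})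
     = card {j. j < x \<and> P (a + j)} + (\<Sum>b<length xs. card {j. j < xs ! b \<and> P ((a + x) + sum_list (take b xs) + j)})"
    by (simp only: length_Cons sum.lessThan_Suc_shift) (simp add: add.assoc)
  also have "\<dots> = card {j. j < x \<and> P (a + j)} + card {j. j < sum_list xs \<and> P ((a + x) + j)}"
    using Cons by simp
  also have "\<dots> = card {j. j < sum_list (x # xs) \<and> P (a + j)}"
    using card_split[of x "sum_list xs" "\<lambda>j. P (a + j)"] by (simp add: add.assoc)
  finally show ?case .
qed

lemma wt_le:
  assumes "\<And>x y::'a::comm_ring_1. x dvd y \<or> y dvd x"
  shows "wt_SR m ns (u :: nat \<Rightarrow> 'a poly) \<le> card {j. j < sum_list ns \<and> u j \<noteq> 0}"
proof -
  have "wt_SR m ns u \<le> (\<Sum>b<length ns. card {j. j < ns ! b \<and> u (0 + sum_list (take b ns) + j) \<noteq> 0})"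
    unfolding wt_SR_def by (rule sum_mono) (use rk_block_le[OF assms] in auto)
  also have "\<dots> = card {j. j < sum_list ns \<and> u (0 + j) \<noteq> 0}"
    by (rule partition_card)
  finally show ?thesis by simp
qed

lemma finite_S_set:
  assumes "finite (UNIV :: 'a::comm_ring_1 set)"
  shows "finite (S_set (h :: 'a poly))"
proof -
  let ?f = "\<lambda>p::'a poly. restrict (coeff p) {0..<degree h}"
  have "inj_on ?f (S_set h)"
  proof (rule inj_onI)
    fix p q assume p: "p \<in> S_set h" and q: "q \<in> S_set h" and e: "?f p = ?f q"
    show "p = q"
    proof (rule poly_eqI)
      fix i show "coeff p i = coeff q i"
      proof (cases "i < degree h")
        case True then show ?thesis using fun_cong[OF e, of i] by simp
      next
        case False then show ?thesis using p q by (simp add: S_set_def coeff_eq_0)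
      qed
    qed
  qed
  moreover have "?f ` S_set h \<subseteq> PiE {0..<degree h} (\<lambda>_. UNIV)" by auto
  moreover have "finite (PiE {0..<degree h} (\<lambda>_. (UNIV :: 'a set)))"
    by (rule finite_PiE) (use assms in auto)
  ultimately show ?thesis using finite_imageD finite_subset by metis
qed

lemma card_S_words_le:
  assumes "finite (S_set h)"
  shows "card (S_words h t) \<le> card (S_set h) ^ t \<and> finite (S_words h t)"
proof -
  let ?f = "\<lambda>c. restrict c {0..<t}"
  have "inj_on ?f (S_words h t)"
  proof (rule inj_onI)
    fix c d assume c: "c \<in> S_words h t" and d: "d \<in> S_words h t" and e: "?f c = ?f d"
    show "c = d"
    proof
      fix i show "c i = d i"
      proof (cases "i < t")
        case True then show ?thesis using fun_cong[OF e, of i] by simp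
      next
        case False then show ?thesis using c d by (simp add: S_words_def)
      qed
    qed
  qed
  moreover have "?f ` S_words h t \<subseteq> PiE {0..<t} (\<lambda>_. S_set h)" by (auto simp: S_words_def)
  moreover have "finite (PiE {0..<t} (\<lambda>_. S_set h))" using assms by (simp add: finite_PiE)
  ultimately have "card (S_words h t) \<le> card (PiE {0..<t} (\<lambda>_. S_set h))"
    using card_inj_on_le by blast
  also have "\<dots> = card (S_set h) ^ t" by (simp add: card_PiE)
  finally show ?thesis using finite_imageD finite_subset \<open>inj_on ?f (S_words h t)\<close>
     \<open>?f ` S_words h t \<subseteq> PiE {0..<t} (\<lambda>_. S_set h)\<close> \<open>finite (PiE {0..<t} (\<lambda>_. S_set h))\<close> by metis
qed

theorem proposition1:
  fixes M :: "'a::comm_ring_1 set" and h :: "'a poly" and ns :: "nat list"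
    and C :: "(nat \<Rightarrow> 'a poly) set"
  assumes "finite_chain_ring TYPE('a)"
    and "cr_maximal_ideal M"
    and "lead_coeff h = 1"
    and "irreducible_mod M h"
    and "\<forall>x\<in>set ns. x > 0"
    and "C \<subseteq> S_words h (sum_list ns)"
    and "card C \<ge> 2"
  shows "real (d_SR_code (degree h) ns C)
           \<le> real (sum_list ns) - log (real (card (S_set h))) (real (card C)) + 1"
proof -
  note chain = chain_dvd[OF assms(1)]
  define n where "n = sum_list ns"
  define m where "m = degree h"
  define q where "q = card (S_set h)"
  have finC: "finite C" using assms(7) card.infinite by fastforce
  define W where "W = {d_SR m ns c d | c d. c \<in> C \<and> d \<in> C \<and> c \<noteq> d}"
  have Weq: "W = (\<lambda>(c, d). d_SR m ns c d) ` {(c, d). c \<in> C \<and> d \<in> C \<and> c \<noteq> d}"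
    unfolding W_def by auto
  have finW: "finite W" unfolding Weq
    by (rule finite_imageI, rule finite_subset[of _ "C \<times> C"]) (use finC in auto)
  obtain c0 d0 where cd0: "c0 \<in> C" "d0 \<in> C" "c0 \<noteq> d0"
  proof -
    from assms(7) have "\<not> card C \<le> Suc 0" by simp
    then have "\<not> (\<forall>a\<in>C. \<forall>b\<in>C. a = b)" using card_le_Suc0_iff_eq[OF finC] by blast
    then show ?thesis using that by blast
  qed
  define \<delta> where "\<delta> = d_SR_code m ns C"
  have \<delta>W: "\<delta> = Min W" unfolding \<delta>_def d_SR_code_def W_def by simp
  have zero_out: "c j = 0" if "c \<in> C" "j \<ge> n" for c :: "nat \<Rightarrow> 'a poly" and j
    using assms(6) that unfolding S_words_def n_def by auto
  have dlt: "d_SR m ns c d \<le> card {j. j < n \<and> c j \<noteq> d j}" for c d :: "nat \<Rightarrow> 'a poly"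
    unfolding d_SR_def n_def using wt_le[OF chain, of m ns "\<lambda>j. c j - d j"] by simp
  have diff_pos: "card {j. j < n \<and> c j \<noteq> d j} \<ge> 1" if "c \<in> C" "d \<in> C" "c \<noteq> d" for c d :: "nat \<Rightarrow> 'a poly"
  proof -
    obtain j where "c j \<noteq> d j" using \<open>c \<noteq> d\<close> by blast
    then have "j < n" using zero_out[OF \<open>c \<in> C\<close>, of j] zero_out[OF \<open>d \<in> C\<close>, of j] by (cases "j < n") auto
    then have "{j. j < n \<and> c j \<noteq> d j} \<noteq> {}" using \<open>c j \<noteq> d j\<close> by blast
    then show ?thesis by (simp add: Suc_leI card_gt_0_iff)
  qed
  have \<delta>le: "\<delta> \<le> d_SR m ns c d" if "c \<in> C" "d \<in> C" "c \<noteq> d" for c d :: "nat \<Rightarrow> 'a poly"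
    unfolding \<delta>W using finW that W_def by (intro Min_le) auto
  have \<delta>n: "\<delta> \<le> n"
  proof -
    have "\<delta> \<le> d_SR m ns c0 d0" using \<delta>le cd0 by blast
    also have "\<dots> \<le> card {j. j < n \<and> c0 j \<noteq> d0 j}" by (rule dlt)
    also have "\<dots> \<le> card {..<n}" by (rule card_mono) auto
    finally show ?thesis by simp
  qed
  define t where "t = n + 1 - \<delta>"
  let ?r = "\<lambda>c. (\<lambda>j. if j < t then c j else 0)"
  have inj: "inj_on ?r C"
  proof (rule inj_onI, rule ccontr)
    fix c d assume c: "c \<in> C" and d: "d \<in> C" and e: "?r c = ?r d" and ne: "c \<noteq> d"
    have "{j. j < n \<and> c j \<noteq> d j} \<subseteq> {t..<n}"
    proof
      fix j assume j: "j \<in> {j. j < n \<and> c j \<noteq> d j}"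
      have "\<not> j < t" using fun_cong[OF e, of j] j by auto
      then show "j \<in> {t..<n}" using j by auto
    qed
    then have "card {j. j < n \<and> c j \<noteq> d j} \<le> n - t"
      using card_mono[of "{t..<n}"] by fastforce
    moreover have "\<delta> \<le> card {j. j < n \<and> c j \<noteq> d j}" using \<delta>le[OF c d ne] dlt le_trans by blast
    moreover have "card {j. j < n \<and> c j \<noteq> d j} \<ge> 1" using diff_pos[OF c d ne] .
    ultimately show False unfolding t_def using \<delta>n by linarith
  qed
  have degpos: "degree h > 0"
  proof (rule ccontr)
    assume "\<not> degree h > 0"
    then have d0: "degree h = 0" by simp
    then have h1: "coeff h 0 = 1" using assms(3) by simp
    have idM: "cr_ideal M" and MU: "M \<noteq> UNIV"
      using assms(2) unfolding cr_maximal_ideal_def by simp_all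
    have mulM: "\<And>a r. a \<in> M \<Longrightarrow> r * a \<in> M" and zM: "0 \<in> M"
      using idM unfolding cr_ideal_def by simp_all
    have "1 \<notin> M"
    proof
      assume "1 \<in> M"
      then have "r \<in> M" for r using mulM[of 1 r] by simp
      then show False using MU by blast
    qed
    moreover have "coeff h i = 0" if "i \<ge> 1" for i using that d0 coeff_eq_0[of h i] by simp
    ultimately have "red_unit M h" unfolding red_unit_def using h1 zM by simp
    then show False using assms(4) unfolding irreducible_mod_def by blast
  qed
  have img: "?r ` C \<subseteq> S_words h t"
  proof
    fix x assume "x \<in> ?r ` C"
    then obtain c where c: "c \<in> C" and x: "x = ?r c" by blast
    have "c j \<in> S_set h" for j
    proof (cases "j < n")
      case True then show ?thesis using assms(6) c unfolding S_words_def n_def by auto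
    next
      case False then show ?thesis using zero_out[OF c, of j] degpos by (simp add: S_set_def)
    qed
    then show "x \<in> S_words h t" unfolding x S_words_def by auto
  qed
  have finS: "finite (S_set h)"
    by (rule finite_S_set) (use assms(1) in \<open>simp add: finite_chain_ring_def\<close>)
  have "card C = card (?r ` C)" using card_image[OF inj] by simp
  also have "\<dots> \<le> card (S_words h t)"
  proof (rule card_mono[OF _ img])
    show "finite (S_words h t)" using card_S_words_le[OF finS, of t] by blast
  qed
  also have "\<dots> \<le> q ^ t" unfolding q_def using card_S_words_le[OF finS] by blast
  finally have Cq: "card C \<le> q ^ t" .
  have q2: "q \<ge> 2"
  proof (rule ccontr)
    assume "\<not> q \<ge> 2"
    then have "q \<le> 1" by simp
    then have "q ^ t \<le> 1 ^ t" by (intro power_mono) simp_all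
    then have "q ^ t \<le> 1" by simp
    then show False using Cq assms(7) by linarith
  qed
  have "log (real q) (real (card C)) \<le> log (real q) (real (q ^ t))"
  proof -
    have "real (card C) \<le> real (q ^ t)" using Cq by (simp only: of_nat_le_iff)
    moreover have "(1::real) < real q" using q2 by simp
    moreover have "(0::real) < real (card C)" using assms(7) by simp
    moreover have "(0::real) < real (q ^ t)" using q2 by simp
    ultimately show ?thesis using log_le_cancel_iff[of "real q" "real (card C)" "real (q ^ t)"] by blast
  qed
  also have "\<dots> = real t" using q2 by (simp add: log_nat_power)
  finally have "log (real q) (real (card C)) \<le> real t" .
  moreover have "real t = real n + 1 - real \<delta>" unfolding t_def using \<delta>n by (simp add: of_nat_diff)
  ultimately have "real \<delta> \<le> real n - log (real q) (real (card C)) + 1" by linarith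
  then show ?thesis unfolding \<delta>_def m_def n_def q_def .
qed

end
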